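(* Let $u_0 \ge 1$ and $r \ge 1$ be integers with $\gcd(u_0,r)=1$. For an integer $n \ge 1$ define $$k_n := \max\left\{0,\ \left\lfloor \frac{n-u_0}{r+1}\right\rfloor + 1\right\}.$$ Let $a \ge 2$ be any given integer. Then for any integers $\alpha \ge a$, $r \ge a$ and $n \ge 2\alpha r$, we have $n - k_n > (\alpha + a - 2) r$.
   Context: $\lfloor x\rfloor$ denotes the largest integer not exceeding $x$. *)

theory Defs
  imports Complex_Main
begin

definition k_seq :: "int \<Rightarrow> int \<Rightarrow> int \<Rightarrow> int" where
  "k_seq u0 r n = max 0 (\<lfloor>real_of_int (n - u0) / real_of_int (r + 1)\<rfloor> + 1)"

end

theory Submission
  imports Defs
begin

theorem lemma3p1:
  fixes u0 r a \<alpha> n :: int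
  assumes "u0 \<ge> 1" and "r \<ge> 1" and "gcd u0 r = 1"
    and "a \<ge> 2" and "\<alpha> \<ge> a" and "r \<ge> a"
    and "n \<ge> 1" and "n \<ge> 2 * \<alpha> * r"
  shows "n - k_seq u0 r n > (\<alpha> + a - 2) * r"
proof -
  define q where "q = (n - u0) div (r + 1)"
  have fl: "\<lfloor>real_of_int (n - u0) / real_of_int (r + 1)\<rfloor> = q"
    unfolding q_def by (metis floor_divide_of_int_eq of_int_add of_int_1)
  have k: "k_seq u0 r n = max 0 (q + 1)" unfolding k_seq_def fl ..
  have qle: "q * (r + 1) \<le> n - 1"
  proof -
    have "q * (r + 1) \<le> n - u0" unfolding q_def
      using assms(2) by (smt (verit) mult.commute div_mult_mod_eq pos_mod_sign)
    thus ?thesis using assms(1) by linarith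
  qed
  have s1: "\<alpha> * (r - 1) \<ge> a * (r - 1)" using assms by (intro mult_right_mono) auto
  have key: "n - 1 > (\<alpha> + a - 2) * (r + 1)"
    using s1 assms by (simp add: algebra_simps)
  show ?thesis
  proof (cases "q + 1 \<le> 0")
    case True
    have ar: "a * r \<le> \<alpha> * r" using assms by (intro mult_right_mono) auto
    have lt: "(\<alpha> + a - 2) * r < 2 * \<alpha> * r" using ar assms(2) by (auto simp: algebra_simps intro: mult_right_mono)
      (smt (verit) mult_right_mono)
    show ?thesis using True k assms(8) lt by simp
  next
    case False
    have "(r + 1) * (n - q - 1) \<ge> r * (n - 1)" using qle by (simp add: algebra_simps)
    moreover have "r * (n - 1) > r * ((\<alpha> + a - 2) * (r + 1))"
      using key assms(2) by simp
    ultimately have "(r + 1) * (n - q - 1) > (r + 1) * ((\<alpha> + a - 2) * r)"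
      by (simp add: algebra_simps)
    hence "n - q - 1 > (\<alpha> + a - 2) * r"
      using assms(2) mult_less_cancel_left_pos[of "r+1"] by simp
    then show ?thesis using False k by simp
  qed
qed

end
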